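(* Let $\mathbf{N}_1,\dots,\mathbf{N}_L$ be nonsingular $D\times D$ integer matrices that are pairwise commutative and coprime, i.e. $\mathbf{N}_i\mathbf{N}_j=\mathbf{N}_j\mathbf{N}_i$ and $\mathbf{N}_i,\mathbf{N}_j$ are coprime for all $i\ne j$. Then for any subset $\{i_1,\dots,i_p\}\subset\{1,\dots,L\}$ and any subset $\{j_1,\dots,j_q\}\subset\{1,\dots,L\}\setminus\{i_1,\dots,i_p\}$, the matrices $\mathbf{N}_{i_1}\cdots\mathbf{N}_{i_p}$ and $\mathbf{N}_{j_1}\cdots\mathbf{N}_{j_q}$ are commutative and coprime. Moreover, for any subset $\{i_1,\dots,i_p\}$ with $p\ge 2$, $\mathbf{N}_{i_1}\cdots\mathbf{N}_{i_p}$ is an lcm (i.e. simultaneously an lcrm and an lclm) of $\mathbf{N}_{i_1},\dots,\mathbf{N}_{i_p}$.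
   Context: All matrices are $D\times D$ integer matrices. Two integer matrices are left (resp. right) coprime if every common left (resp. right) divisor is unimodular (integer with determinant $\pm1$); $\mathbf{A}$ is a left divisor of $\mathbf{M}$ if $\mathbf{A}^{-1}\mathbf{M}$ is an integer matrix, a right divisor if $\mathbf{M}\mathbf{A}^{-1}$ is. For commuting nonsingular integer matrices, left and right coprimeness are equivalent and are simply called "coprime". Crm/lcrm: a nonsingular integer $\mathbf{C}$ with $\mathbf{C}=\mathbf{M}_i\mathbf{P}_i$ ($\mathbf{P}_i$ integer) for all $i$ is a crm; an lcrm is a crm $\mathbf{R}$ such that every crm equals $\mathbf{R}\mathbf{A}$ for an integer $\mathbf{A}$; clm/lclm are defined symmetrically with left multiplication. An "lcm" means a matrix that is both an lcrm and an lclm. *)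

theory Defs
  imports "HOL-Analysis.Analysis"
begin

(* D x D integer matrices are modelled as int^'n^'n, with D = CARD('n). *)

definition nonsingular :: "int^'n^'n \<Rightarrow> bool" where
  "nonsingular M \<longleftrightarrow> det M \<noteq> 0"

definition unimodular :: "int^'n^'n \<Rightarrow> bool" where
  "unimodular U \<longleftrightarrow> det U = 1 \<or> det U = -1"

(* A is a left divisor of M: A^{-1} M is an integer matrix, i.e. M = A X with X integer *)
definition left_divisor :: "int^'n^'n \<Rightarrow> int^'n^'n \<Rightarrow> bool" where
  "left_divisor A M \<longleftrightarrow> nonsingular A \<and> (\<exists>X::int^'n^'n. M = A ** X)"

(* A is a right divisor of M: M A^{-1} is an integer matrix, i.e. M = X A with X integer *)
definition right_divisor :: "int^'n^'n \<Rightarrow> int^'n^'n \<Rightarrow> bool" where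
  "right_divisor A M \<longleftrightarrow> nonsingular A \<and> (\<exists>X::int^'n^'n. M = X ** A)"

definition left_coprime :: "int^'n^'n \<Rightarrow> int^'n^'n \<Rightarrow> bool" where
  "left_coprime M1 M2 \<longleftrightarrow>
     (\<forall>A. left_divisor A M1 \<and> left_divisor A M2 \<longrightarrow> unimodular A)"

definition right_coprime :: "int^'n^'n \<Rightarrow> int^'n^'n \<Rightarrow> bool" where
  "right_coprime M1 M2 \<longleftrightarrow>
     (\<forall>A. right_divisor A M1 \<and> right_divisor A M2 \<longrightarrow> unimodular A)"

(* "coprime" for commuting nonsingular matrices: left and right coprime (equivalent there) *)
definition mat_coprime :: "int^'n^'n \<Rightarrow> int^'n^'n \<Rightarrow> bool" where
  "mat_coprime M1 M2 \<longleftrightarrow> left_coprime M1 M2 \<and> right_coprime M1 M2"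

definition is_crm :: "('i \<Rightarrow> int^'n^'n) \<Rightarrow> 'i set \<Rightarrow> int^'n^'n \<Rightarrow> bool" where
  "is_crm M I C \<longleftrightarrow> nonsingular C \<and> (\<forall>i\<in>I. \<exists>P::int^'n^'n. C = M i ** P)"

definition is_lcrm :: "('i \<Rightarrow> int^'n^'n) \<Rightarrow> 'i set \<Rightarrow> int^'n^'n \<Rightarrow> bool" where
  "is_lcrm M I R \<longleftrightarrow> is_crm M I R \<and>
     (\<forall>C. is_crm M I C \<longrightarrow> (\<exists>A::int^'n^'n. C = R ** A))"

definition is_clm :: "('i \<Rightarrow> int^'n^'n) \<Rightarrow> 'i set \<Rightarrow> int^'n^'n \<Rightarrow> bool" where
  "is_clm M I C \<longleftrightarrow> nonsingular C \<and> (\<forall>i\<in>I. \<exists>P::int^'n^'n. C = P ** M i)"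

definition is_lclm :: "('i \<Rightarrow> int^'n^'n) \<Rightarrow> 'i set \<Rightarrow> int^'n^'n \<Rightarrow> bool" where
  "is_lclm M I R \<longleftrightarrow> is_clm M I R \<and>
     (\<forall>C. is_clm M I C \<longrightarrow> (\<exists>A::int^'n^'n. C = A ** R))"

definition is_lcm :: "('i \<Rightarrow> int^'n^'n) \<Rightarrow> 'i set \<Rightarrow> int^'n^'n \<Rightarrow> bool" where
  "is_lcm M I R \<longleftrightarrow> is_lcrm M I R \<and> is_lclm M I R"

definition mat_prod_list :: "(nat \<Rightarrow> int^'n^'n) \<Rightarrow> nat list \<Rightarrow> int^'n^'n" where
  "mat_prod_list N is = foldr (\<lambda>i P. N i ** P) is (mat 1)"

end

theory Submission
  imports Defs
begin

definition rm :: "int^'n^'n \<Rightarrow> real^'n^'n" where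
  "rm A = (\<chi> i j. real_of_int (A$i$j))"
definition rv :: "int^'n \<Rightarrow> real^'n" where
  "rv u = (\<chi> i. real_of_int (u$i))"

lemma rm_mult: "rm (A ** B) = rm A ** rm B"
  by (simp add: rm_def matrix_matrix_mult_def vec_eq_iff)
lemma rm_add: "rm (A + B) = rm A + rm B"
  by (simp add: rm_def vec_eq_iff)
lemma rm_diff: "rm (A - B) = rm A - rm B"
  by (simp add: rm_def vec_eq_iff)
lemma rm_one: "rm (mat 1) = mat 1"
  by (simp add: rm_def mat_def vec_eq_iff)
lemma rm_inj: "rm A = rm B \<Longrightarrow> A = B"
  by (simp add: rm_def vec_eq_iff)
lemma rv_inj: "rv A = rv B \<Longrightarrow> A = B"
  by (simp add: rv_def vec_eq_iff)
lemma rm_mv: "rm A *v rv u = rv (A *v u)"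
  by (simp add: rm_def rv_def matrix_vector_mult_def vec_eq_iff)
lemma rv_diff: "rv (u - w) = rv u - rv w"
  by (simp add: rv_def vec_eq_iff)
lemma det_rm: "det (rm A) = real_of_int (det A)"
  by (simp add: det_def rm_def of_int_sum of_int_mult of_int_prod)
lemma rm_invertible: "det A \<noteq> 0 \<Longrightarrow> invertible (rm A)"
  by (simp add: invertible_det_nz det_rm)

lemma matrix_add_rdistrib': "((B + C) ** A) = (B ** A) + (C ** A)"
  by (vector matrix_matrix_mult_def sum.distrib[symmetric] field_simps)


definition colrep :: "int^'n^'n \<Rightarrow> 'n \<Rightarrow> int^'n \<Rightarrow> int^'n^'n" where
  "colrep G k v = (\<chi> i j. if j = k then v$i else G$i$j)"

definition cvec :: "int^'n^'n \<Rightarrow> int^'n \<Rightarrow> int^'n" where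
  "cvec G v = (\<chi> k. det (colrep G k v))"

lemma rm_colrep: "rm (colrep G k v) = (\<chi> i j. if j = k then rv v$i else rm G$i$j)"
  by (simp add: rm_def rv_def colrep_def vec_eq_iff)

lemma cramer_real:
  assumes "det G \<noteq> 0"
  shows "rm G *v (\<chi> k. real_of_int (cvec G v $ k) / real_of_int (det G)) = rv v"
proof -
  have "det (rm G) \<noteq> 0" using assms by (simp add: det_rm)
  then show ?thesis
    using cramer[of "rm G" _ "rv v"] by (simp add: cvec_def det_rm rm_colrep[symmetric])
qed

lemma adj_vec:
  assumes "det G \<noteq> 0"
  shows "G *v cvec G v = det G *s v"
proof -
  have "rv (cvec G v) = real_of_int (det G) *s (\<chi> k. real_of_int (cvec G v $ k) / real_of_int (det G))"
    using assms by (simp add: rv_def vec_eq_iff)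
  then have "rm G *v rv (cvec G v) = real_of_int (det G) *s rv v"
    using cramer_real[OF assms, of v] by (simp add: vector_scalar_commute)
  then have "rv (G *v cvec G v) = rv (det G *s v)"
    by (simp only: rm_mv) (simp add: rv_def vec_eq_iff)
  then show ?thesis by (rule rv_inj)
qed


lemma mult_colrep: "A ** colrep X k u = colrep (A ** X) k (A *v u)"
  by (simp add: colrep_def matrix_matrix_mult_def matrix_vector_mult_def vec_eq_iff)

lemma add_colrep: "colrep B k a + colrep C k b = colrep (B + C) k (a + b)"
  by (simp add: colrep_def vec_eq_iff)

lemma mv_diff: "(A::int^'n^'n) *v (a - b) = A *v a - A *v b"
  by (simp add: matrix_vector_mult_def vec_eq_iff sum_subtractf right_diff_distrib)

lemma mv_add: "(A::int^'n^'n) *v (a + b) = A *v a + A *v b"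
  by (simp add: matrix_vector_mult_def vec_eq_iff sum.distrib distrib_left)

lemma madd_mv: "((A::int^'n^'n) + B) *v a = A *v a + B *v a"
  by (simp add: matrix_vector_mult_def vec_eq_iff sum.distrib distrib_right)

lemma lattice_gen:
  fixes M1 M2 :: "int^'n^'n"
  assumes "det M1 \<noteq> 0"
  shows "\<exists>G X Y. det G \<noteq> 0 \<and> G = M1**X + M2**Y \<and> (\<forall>x y. \<exists>z. M1 *v x + M2 *v y = G *v z)"
proof -
  define Pd where "Pd n \<longleftrightarrow> (\<exists>G X Y. det G \<noteq> 0 \<and> G = M1**X + M2**Y \<and> nat \<bar>det G\<bar> = n)" for n
  have "Pd (nat \<bar>det M1\<bar>)" unfolding Pd_def
    by (rule exI[of _ M1], rule exI[of _ "mat 1"], rule exI[of _ 0]) (simp add: assms)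
  then have "Pd (LEAST n. Pd n)" by (rule LeastI)
  then obtain G X Y where G0: "det G \<noteq> 0" and GXY: "G = M1**X + M2**Y"
    and Gmin: "nat \<bar>det G\<bar> = (LEAST n. Pd n)" unfolding Pd_def by blast
  have "\<exists>z. M1 *v x + M2 *v y = G *v z" for x y
  proof -
    define v where "v = M1 *v x + M2 *v y"
    define d where "d = det G"
    define w where "w = cvec G v"
    define q where "q = (\<chi> k. w$k div d)"
    define r where "r = (\<chi> k. w$k mod d)"
    have d0: "d \<noteq> 0" using G0 d_def by simp
    have wqr: "w$k = d * q$k + r$k" for k by (simp add: q_def r_def)
    have Gw: "G *v w = d *s v" using adj_vec[OF G0] w_def d_def by simp
    show ?thesis
    proof (cases "r = 0")
      case True
      then have "w = d *s q" using wqr by (simp add: vec_eq_iff)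
      then have "d *s (G *v q) = d *s v" using Gw
        by (simp add: vec_eq_iff matrix_vector_mult_def sum_distrib_left mult_ac)
      then have "G *v q = v" using d0 by (simp add: vec_eq_iff)
      then show ?thesis unfolding v_def by metis
    next
      case False
      then obtain k where rk: "r$k \<noteq> 0" by (auto simp: vec_eq_iff)
      define v' where "v' = v - G *v q"
      define G' where "G' = colrep G k v'"
      define yr where "yr = (\<chi> j. real_of_int (r$j) / real_of_int d)"
      define x0 where "x0 = (\<chi> k. real_of_int (cvec G v $ k) / real_of_int (det G))"
      have x0: "rm G *v x0 = rv v" using cramer_real[OF G0] x0_def by simp
      have "x0 - rv q = yr" using d0
        by (simp add: x0_def yr_def rv_def vec_eq_iff w_def[symmetric] d_def[symmetric] wqr field_simps)
      have "rv v' = rm G *v yr"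
      proof -
        have "rv v' = rv v - rm G *v rv q" by (simp add: v'_def rv_diff rm_mv)
        also have "\<dots> = rm G *v (x0 - rv q)" by (simp add: x0 matrix_vector_mult_diff_distrib)
        finally show ?thesis using \<open>x0 - rv q = yr\<close> by simp
      qed
      then have "rm G' = (\<chi> i j. if j = k then (rm G *v yr)$i else rm G$i$j)"
        unfolding G'_def rm_colrep by metis
      then have "det (rm G') = yr$k * det (rm G)" by (simp add: cramer_lemma)
      then have "real_of_int (det G') = real_of_int (r$k)"
        using d0 by (simp add: det_rm yr_def d_def)
      then have dG': "det G' = r$k" by simp
      have "\<bar>r$k\<bar> < \<bar>d\<bar>" using d0 by (simp add: r_def abs_mod_less)
      then have lt: "nat \<bar>det G'\<bar> < nat \<bar>det G\<bar>" using dG' d_def by simp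
      have "G' = M1 ** colrep X k (x - X *v q) + M2 ** colrep Y k (y - Y *v q)"
        by (simp add: mult_colrep add_colrep G'_def v'_def GXY v_def mv_diff madd_mv
              matrix_vector_mul_assoc algebra_simps)
      then have "Pd (nat \<bar>det G'\<bar>)" unfolding Pd_def using dG' rk
        by (intro exI[of _ G'] exI[of _ "colrep X k (x - X *v q)"] exI[of _ "colrep Y k (y - Y *v q)"]) simp
      then have "(LEAST n. Pd n) \<le> nat \<bar>det G'\<bar>" by (rule Least_le)
      then show ?thesis using lt Gmin by simp
    qed
  qed
  then show ?thesis using G0 GXY by blast
qed


lemma mat_by_cols:
  assumes "\<And>j. (G::int^'n^'n) *v (\<chi> i. Z$i$j) = (\<chi> i. B$i$j)"
  shows "G ** Z = B"
proof -
  have "(G ** Z)$i$j = B$i$j" for i j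
    using assms[of j] by (simp add: vec_eq_iff matrix_matrix_mult_def matrix_vector_mult_def)
  then show ?thesis by (simp add: vec_eq_iff)
qed

lemma lattice_mat:
  assumes "\<forall>x y. \<exists>z. M1 *v x + M2 *v y = G *v z"
  shows "\<exists>Z. M1 ** X + M2 ** Y = (G::int^'n^'n) ** Z"
proof -
  from assms obtain f where f: "\<And>x y. M1 *v x + M2 *v y = G *v f x y" by metis
  define Z where "Z = (\<chi> i j. f (\<chi> l. X$l$j) (\<chi> l. Y$l$j) $ i)"
  have "G ** Z = M1 ** X + M2 ** Y"
  proof (rule mat_by_cols)
    fix j
    have "(\<chi> i. Z$i$j) = f (\<chi> l. X$l$j) (\<chi> l. Y$l$j)" by (simp add: Z_def vec_eq_iff)
    then have "G *v (\<chi> i. Z$i$j) = M1 *v (\<chi> l. X$l$j) + M2 *v (\<chi> l. Y$l$j)" using f by simp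
    then show "G *v (\<chi> i. Z$i$j) = (\<chi> i. (M1 ** X + M2 ** Y)$i$j)"
      by (simp add: vec_eq_iff matrix_matrix_mult_def matrix_vector_mult_def)
  qed
  then show ?thesis by metis
qed

lemma unimod_inv:
  assumes "unimodular (G::int^'n^'n)"
  shows "\<exists>W. G ** W = mat 1"
proof -
  have d: "det G * det G = 1" "det G \<noteq> 0" using assms unfolding unimodular_def by auto
  define W where "W = (\<chi> i j. det G * cvec G (axis j 1) $ i)"
  have "G ** W = mat 1"
  proof (rule mat_by_cols)
    fix j
    have "(\<chi> i. W$i$j) = det G *s cvec G (axis j 1)" by (simp add: W_def vec_eq_iff)
    then have "G *v (\<chi> i. W$i$j) = det G *s (G *v cvec G (axis j 1))"
      by (simp add: vec_eq_iff matrix_vector_mult_def sum_distrib_left mult_ac)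
    also have "\<dots> = axis j 1" using adj_vec[OF d(2)] d(1)
      by (simp add: vec_eq_iff mult.assoc[symmetric])
    finally show "G *v (\<chi> i. W$i$j) = (\<chi> i. mat 1 $i$j)"
      by (simp add: vec_eq_iff axis_def mat_def eq_commute)
  qed
  then show ?thesis by blast
qed

lemma left_bezout:
  assumes "nonsingular M1" "left_coprime M1 M2"
  shows "\<exists>X Y. M1**X + M2**Y = mat 1"
proof -
  obtain G X Y where G: "det G \<noteq> 0" "G = M1**X + M2**Y" "\<forall>x y. \<exists>z. M1 *v x + M2 *v y = G *v z"
    using lattice_gen[of M1 M2] assms(1) unfolding nonsingular_def by blast
  obtain Z1 where "M1 ** mat 1 + M2 ** 0 = G ** Z1" using lattice_mat[OF G(3)] by blast
  then have Z1: "M1 = G ** Z1" by simp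
  obtain Z2 where "M1 ** 0 + M2 ** mat 1 = G ** Z2" using lattice_mat[OF G(3)] by blast
  then have Z2: "M2 = G ** Z2" by simp
  have "unimodular G" using assms(2) Z1 Z2 G(1)
    unfolding left_coprime_def left_divisor_def nonsingular_def by blast
  then obtain W where W: "G ** W = mat 1" using unimod_inv by blast
  have "M1 ** (X ** W) + M2 ** (Y ** W) = mat 1"
    using W G(2) by (simp add: matrix_mul_assoc matrix_add_rdistrib')
  then show ?thesis by blast
qed

lemma transpose_add': "transpose (A + B) = transpose A + transpose B"
  by (simp add: transpose_def vec_eq_iff)

lemma transpose_nonsingular: "nonsingular (transpose A) = nonsingular A"
  by (simp add: nonsingular_def)

lemma right_bezout:
  assumes "nonsingular M1" "right_coprime M1 M2"
  shows "\<exists>X Y. X**M1 + Y**M2 = mat 1"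
proof -
  have "left_coprime (transpose M1) (transpose M2)"
    unfolding left_coprime_def
  proof (intro allI impI)
    fix A assume "left_divisor A (transpose M1) \<and> left_divisor A (transpose M2)"
    then obtain X1 X2 where "nonsingular A" "transpose M1 = A ** X1" "transpose M2 = A ** X2"
      unfolding left_divisor_def by blast
    then have "M1 = transpose X1 ** transpose A" "M2 = transpose X2 ** transpose A" "nonsingular (transpose A)"
      by (metis matrix_transpose_mul transpose_transpose, metis matrix_transpose_mul transpose_transpose,
          simp add: transpose_nonsingular)
    then have "unimodular (transpose A)" using assms(2) unfolding right_coprime_def right_divisor_def by blast
    then show "unimodular A" by (simp add: unimodular_def)
  qed
  then obtain X Y where "transpose M1 ** X + transpose M2 ** Y = mat 1"
    using left_bezout assms(1) transpose_nonsingular by blast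
  then have "transpose (transpose M1 ** X + transpose M2 ** Y) = mat 1" by simp
  then have "transpose X ** M1 + transpose Y ** M2 = mat 1"
    by (simp add: matrix_transpose_mul transpose_add')
  then show ?thesis by blast
qed

lemma int_unit: "(a::int) * b = 1 \<Longrightarrow> a = 1 \<or> a = -1"
  using zmult_eq_1_iff by blast

lemma bezout_left_coprime:
  assumes "M1**X + M2**Y = mat 1"
  shows "left_coprime M1 M2"
  unfolding left_coprime_def
proof (intro allI impI)
  fix A assume "left_divisor A M1 \<and> left_divisor A M2"
  then obtain P Q where "M1 = A ** P" "M2 = A ** Q" unfolding left_divisor_def by blast
  then have "A ** (P ** X + Q ** Y) = mat 1" using assms
    by (simp add: matrix_add_ldistrib matrix_mul_assoc)
  then have "det A * det (P ** X + Q ** Y) = 1" by (metis det_mul det_I)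
  then show "unimodular A" unfolding unimodular_def by (rule int_unit)
qed

lemma bezout_right_coprime:
  assumes "X**M1 + Y**M2 = mat 1"
  shows "right_coprime M1 M2"
  unfolding right_coprime_def
proof (intro allI impI)
  fix A assume "right_divisor A M1 \<and> right_divisor A M2"
  then obtain P Q where "M1 = P ** A" "M2 = Q ** A" unfolding right_divisor_def by blast
  then have "(X ** P + Y ** Q) ** A = mat 1" using assms
    by (simp add: matrix_add_rdistrib' matrix_mul_assoc)
  then have "det A * det (X ** P + Y ** Q) = 1" by (metis det_mul det_I mult.commute)
  then show "unimodular A" unfolding unimodular_def by (rule int_unit)
qed


lemma lcrm_real:
  fixes a b x y c p q :: "real^'n^'n"
  assumes "invertible a" "invertible b" "a**b = b**a" "x**a + y**b = mat 1" "c = a**p" "c = b**q"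
  shows "c = a**b**(x**q + y**p)"
proof -
  obtain ia where ia: "a**ia = mat 1" "ia**a = mat 1" using assms(1) unfolding invertible_def by blast
  obtain ib where ib: "b**ib = mat 1" "ib**b = mat 1" using assms(2) unfolding invertible_def by blast
  have p: "p = ia ** c" using assms(5) ia by (simp add: matrix_mul_assoc)
  have q: "q = ib ** c" using assms(6) ib by (simp add: matrix_mul_assoc)
  have bia: "b ** ia = ia ** b"
  proof -
    have "b ** ia = ia ** a ** b ** ia" using ia by (simp add: matrix_mul_assoc)
    also have "\<dots> = ia ** (a ** b) ** ia" by (simp add: matrix_mul_assoc)
    also have "\<dots> = ia ** (b ** a) ** ia" using assms(3) by simp
    also have "\<dots> = ia ** b" using ia by (simp add: matrix_mul_assoc[symmetric])
    finally show ?thesis .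
  qed
  have "(x**a + y**b) ** ia ** ib = x ** ib + y ** ia"
    by (simp add: matrix_add_rdistrib' matrix_mul_assoc[symmetric] ia ib bia)
  then have e: "x ** ib + y ** ia = ia ** ib" using assms(4) by simp
  have "a**b**(x**q + y**p) = a**b**((x ** ib + y ** ia) ** c)"
    by (simp add: p q matrix_add_ldistrib matrix_add_rdistrib' matrix_mul_assoc)
  also have "\<dots> = a ** (b ** ia) ** ib ** c" by (simp add: e matrix_mul_assoc)
  also have "\<dots> = c" by (simp add: bia matrix_mul_assoc ia ib)
  finally show ?thesis by simp
qed

lemma lcrm2:
  fixes n1 n2 X Y C P Q :: "int^'n^'n"
  assumes "nonsingular n1" "nonsingular n2" "n1**n2 = n2**n1" "X**n1 + Y**n2 = mat 1"
    "C = n1**P" "C = n2**Q"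
  shows "C = n1**n2**(X**Q + Y**P)"
proof -
  have "rm C = rm n1 ** rm n2 ** (rm X ** rm Q + rm Y ** rm P)"
    apply (rule lcrm_real)
    using assms by (auto simp: rm_invertible nonsingular_def rm_mult[symmetric] rm_add[symmetric] rm_one)
  then show ?thesis by (intro rm_inj) (simp add: rm_mult rm_add)
qed

lemma lclm2:
  fixes n1 n2 X Y C P Q :: "int^'n^'n"
  assumes "nonsingular n1" "nonsingular n2" "n1**n2 = n2**n1" "n1**X + n2**Y = mat 1"
    "C = P**n1" "C = Q**n2"
  shows "C = (Q**X + P**Y)**(n1**n2)"
proof -
  have "transpose C = transpose n1 ** transpose n2 ** (transpose X ** transpose Q + transpose Y ** transpose P)"
  proof (rule lcrm2)
    show "nonsingular (transpose n1)" "nonsingular (transpose n2)"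
      using assms by (simp_all add: transpose_nonsingular)
    show "transpose n1 ** transpose n2 = transpose n2 ** transpose n1"
      by (metis matrix_transpose_mul assms(3))
    show "transpose X ** transpose n1 + transpose Y ** transpose n2 = mat 1"
      by (metis matrix_transpose_mul transpose_add' transpose_mat assms(4))
    show "transpose C = transpose n1 ** transpose P" "transpose C = transpose n2 ** transpose Q"
      using assms(5,6) by (metis matrix_transpose_mul)+
  qed
  then have "transpose (transpose C) = transpose (transpose n1 ** transpose n2 ** (transpose X ** transpose Q + transpose Y ** transpose P))"
    by simp
  then have "C = (Q**X + P**Y) ** (n2 ** n1)"
    by (simp add: matrix_transpose_mul transpose_add')
  then show ?thesis using assms(3) by simp
qed

definition lb :: "int^'n^'n \<Rightarrow> int^'n^'n \<Rightarrow> bool" where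
  "lb A B \<longleftrightarrow> (\<exists>X Y. A**X + B**Y = mat 1)"
definition rb :: "int^'n^'n \<Rightarrow> int^'n^'n \<Rightarrow> bool" where
  "rb A B \<longleftrightarrow> (\<exists>X Y. X**A + Y**B = mat 1)"

lemma lb_sym: "lb A B \<Longrightarrow> lb B A"
  unfolding lb_def by (metis add.commute)
lemma rb_sym: "rb A B \<Longrightarrow> rb B A"
  unfolding rb_def by (metis add.commute)
lemma lb_one: "lb A (mat 1)"
  unfolding lb_def by (rule exI[of _ 0], rule exI[of _ "mat 1"]) simp
lemma rb_one: "rb A (mat 1)"
  unfolding rb_def by (rule exI[of _ 0], rule exI[of _ "mat 1"]) simp

lemma lb_mult:
  assumes "lb A B" "lb A C" "A**B = B**A"
  shows "lb A (B**C)"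
proof -
  obtain X1 Y1 where 1: "A**X1 + B**Y1 = mat 1" using assms(1) lb_def by blast
  obtain X2 Y2 where 2: "A**X2 + C**Y2 = mat 1" using assms(2) lb_def by blast
  have "B**Y1 = B**(A**X2 + C**Y2)**Y1" using 2 by simp
  also have "\<dots> = A**(B**X2**Y1) + (B**C)**(Y2**Y1)"
    by (simp add: matrix_add_ldistrib matrix_add_rdistrib' matrix_mul_assoc assms(3))
  finally have "A**(X1 + B**X2**Y1) + (B**C)**(Y2**Y1) = mat 1"
    using 1 by (simp add: matrix_add_ldistrib add.assoc)
  then show ?thesis unfolding lb_def by blast
qed

lemma rb_mult:
  assumes "rb A B" "rb A C" "A**C = C**A"
  shows "rb A (B**C)"
proof -
  obtain X1 Y1 where 1: "X1**A + Y1**C = mat 1" using assms(2) rb_def by blast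
  obtain X2 Y2 where 2: "X2**A + Y2**B = mat 1" using assms(1) rb_def by blast
  have "Y1**C = Y1**(X2**A + Y2**B)**C" using 2 by simp
  also have "\<dots> = (Y1**X2**C)**A + (Y1**Y2)**(B**C)"
    by (simp add: matrix_add_ldistrib matrix_add_rdistrib' matrix_mul_assoc)
       (metis assms(3) matrix_mul_assoc)
  finally have "(X1 + Y1**X2**C)**A + (Y1**Y2)**(B**C) = mat 1"
    using 1 by (simp add: matrix_add_rdistrib' add.assoc)
  then show ?thesis unfolding rb_def by blast
qed


lemma pl_Nil [simp]: "mat_prod_list N [] = mat 1"
  by (simp add: mat_prod_list_def)
lemma pl_Cons [simp]: "mat_prod_list N (a # xs) = N a ** mat_prod_list N xs"
  by (simp add: mat_prod_list_def)

lemma comm_pl: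
  assumes "\<forall>j\<in>set js. A ** N j = N j ** A"
  shows "A ** mat_prod_list N js = mat_prod_list N js ** A"
  using assms
proof (induction js)
  case Nil then show ?case by simp
next
  case (Cons a js)
  have h: "A ** mat_prod_list N js = mat_prod_list N js ** A" using Cons by simp
  have h2: "A ** N a = N a ** A" using Cons.prems by simp
  have "A ** (N a ** mat_prod_list N js) = N a ** (A ** mat_prod_list N js)"
    by (metis h2 matrix_mul_assoc)
  also have "\<dots> = N a ** mat_prod_list N js ** A" by (metis h matrix_mul_assoc)
  finally show ?case by simp
qed

lemma nonsing_pl:
  assumes "\<forall>j\<in>set js. nonsingular (N j)"
  shows "nonsingular (mat_prod_list N js)"
  using assms by (induction js) (auto simp: nonsingular_def det_mul)

context
  fixes N :: "nat \<Rightarrow> int^'n^'n" and L :: nat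
  assumes nonsing: "\<forall>i\<in>{1..L}. nonsingular (N i)"
    and comm: "\<forall>i\<in>{1..L}. \<forall>j\<in>{1..L}. i \<noteq> j \<longrightarrow> N i ** N j = N j ** N i"
    and cop: "\<forall>i\<in>{1..L}. \<forall>j\<in>{1..L}. i \<noteq> j \<longrightarrow> mat_coprime (N i) (N j)"
begin

lemma comm': "i \<in> {1..L} \<Longrightarrow> j \<in> {1..L} \<Longrightarrow> N i ** N j = N j ** N i"
  using comm by (cases "i = j") auto

lemma bz: "i \<in> {1..L} \<Longrightarrow> j \<in> {1..L} \<Longrightarrow> i \<noteq> j \<Longrightarrow> lb (N i) (N j) \<and> rb (N i) (N j)"
  using cop nonsing left_bezout right_bezout unfolding mat_coprime_def lb_def rb_def by blast

lemma comm_pl_N: "set js \<subseteq> {1..L} \<Longrightarrow> i \<in> {1..L} \<Longrightarrow> N i ** mat_prod_list N js = mat_prod_list N js ** N i"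
  by (rule comm_pl) (use comm' in blast)

lemma comm_pl_pl: "set js \<subseteq> {1..L} \<Longrightarrow> set xs \<subseteq> {1..L} \<Longrightarrow>
   mat_prod_list N xs ** mat_prod_list N js = mat_prod_list N js ** mat_prod_list N xs"
  by (rule comm_pl) (metis comm_pl_N subsetD)

lemma bz_single: "set js \<subseteq> {1..L} \<Longrightarrow> i \<in> {1..L} \<Longrightarrow> i \<notin> set js \<Longrightarrow>
   lb (N i) (mat_prod_list N js) \<and> rb (N i) (mat_prod_list N js)"
proof (induction js)
  case Nil then show ?case by (simp add: lb_one rb_one)
next
  case (Cons a js)
  then have a: "a \<in> {1..L}" "a \<noteq> i" by auto
  have "lb (N i) (N a ** mat_prod_list N js)"
    using Cons a bz comm' by (intro lb_mult) auto
  moreover have "rb (N i) (N a ** mat_prod_list N js)"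
    using Cons a bz comm_pl_N by (intro rb_mult) auto
  ultimately show ?case by simp
qed

lemma bz_lists: "set js \<subseteq> {1..L} \<Longrightarrow> set xs \<subseteq> {1..L} \<Longrightarrow> set xs \<inter> set js = {} \<Longrightarrow>
   lb (mat_prod_list N xs) (mat_prod_list N js) \<and> rb (mat_prod_list N xs) (mat_prod_list N js)"
proof (induction xs)
  case Nil then show ?case by (metis lb_one lb_sym rb_one rb_sym pl_Nil)
next
  case (Cons a xs)
  then have a: "a \<in> {1..L}" "a \<notin> set js" "set xs \<subseteq> {1..L}" by auto
  have IH: "lb (mat_prod_list N js) (mat_prod_list N xs)" "rb (mat_prod_list N js) (mat_prod_list N xs)"
    using Cons lb_sym rb_sym by auto
  have s: "lb (mat_prod_list N js) (N a)" "rb (mat_prod_list N js) (N a)"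
    using bz_single[OF Cons.prems(1) a(1,2)] lb_sym rb_sym by auto
  have "lb (mat_prod_list N js) (N a ** mat_prod_list N xs)"
    using IH s comm_pl_N[OF Cons.prems(1) a(1)] by (intro lb_mult) auto
  moreover have "rb (mat_prod_list N js) (N a ** mat_prod_list N xs)"
    using IH s comm_pl_pl[OF a(3) Cons.prems(1)] by (intro rb_mult) auto
  ultimately show ?case by (metis lb_sym rb_sym pl_Cons)
qed

lemma pl_remove: "set xs \<subseteq> {1..L} \<Longrightarrow> i \<in> set xs \<Longrightarrow>
  mat_prod_list N xs = N i ** mat_prod_list N (remove1 i xs) \<and>
  mat_prod_list N xs = mat_prod_list N (remove1 i xs) ** N i"
proof (induction xs)
  case Nil then show ?case by simp
next
  case (Cons a xs)
  show ?case
  proof (cases "a = i")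
    case True
    then show ?thesis using Cons.prems comm_pl_N[of xs i] by auto
  next
    case False
    then have i: "i \<in> set xs" "set xs \<subseteq> {1..L}" "a \<in> {1..L}" "i \<in> {1..L}" using Cons.prems by auto
    then have IH: "mat_prod_list N xs = N i ** mat_prod_list N (remove1 i xs)"
      "mat_prod_list N xs = mat_prod_list N (remove1 i xs) ** N i" using Cons.IH by auto
    have "N a ** mat_prod_list N xs = N i ** (N a ** mat_prod_list N (remove1 i xs))"
      using IH(1) comm'[OF i(3,4)] by (metis matrix_mul_assoc)
    moreover have "N a ** mat_prod_list N xs = (N a ** mat_prod_list N (remove1 i xs)) ** N i"
      using IH(2) by (metis matrix_mul_assoc)
    ultimately show ?thesis using False by simp
  qed
qed

lemma lcrm_list: "set xs \<subseteq> {1..L} \<Longrightarrow> distinct xs \<Longrightarrow> (\<forall>i\<in>set xs. \<exists>P. (C::int^'n^'n) = N i ** P) \<Longrightarrow>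
   \<exists>A. C = mat_prod_list N xs ** A"
proof (induction xs)
  case Nil then show ?case by (metis pl_Nil matrix_mul_lid)
next
  case (Cons a xs)
  then obtain A' where A': "C = mat_prod_list N xs ** A'" by auto
  obtain P where P: "C = N a ** P" using Cons.prems by auto
  have a: "a \<in> {1..L}" "a \<notin> set xs" "set xs \<subseteq> {1..L}" using Cons.prems by auto
  obtain X Y where XY: "X ** N a + Y ** mat_prod_list N xs = mat 1"
    using bz_single[OF a(3,1,2)] unfolding rb_def by blast
  have "C = N a ** mat_prod_list N xs ** (X ** A' + Y ** P)"
    using lcrm2[of "N a" "mat_prod_list N xs" X Y C P A'] comm_pl_N[OF a(3,1)] XY P A'
      a nonsing nonsing_pl[of xs N] by auto
  then show ?case by (simp add: matrix_mul_assoc) blast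
qed

lemma lclm_list: "set xs \<subseteq> {1..L} \<Longrightarrow> distinct xs \<Longrightarrow> (\<forall>i\<in>set xs. \<exists>P. (C::int^'n^'n) = P ** N i) \<Longrightarrow>
   \<exists>A. C = A ** mat_prod_list N xs"
proof (induction xs)
  case Nil then show ?case by (metis pl_Nil matrix_mul_rid)
next
  case (Cons a xs)
  then obtain A' where A': "C = A' ** mat_prod_list N xs" by auto
  obtain P where P: "C = P ** N a" using Cons.prems by auto
  have a: "a \<in> {1..L}" "a \<notin> set xs" "set xs \<subseteq> {1..L}" using Cons.prems by auto
  obtain X Y where XY: "N a ** X + mat_prod_list N xs ** Y = mat 1"
    using bz_single[OF a(3,1,2)] unfolding lb_def by blast
  have "C = (A' ** X + P ** Y) ** (N a ** mat_prod_list N xs)"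
    using lclm2[of "N a" "mat_prod_list N xs" X Y C P A'] comm_pl_N[OF a(3,1)] XY P A'
      a nonsing nonsing_pl[of xs N] by auto
  then show ?case by auto
qed

end


theorem lemma2:
  fixes N :: "nat \<Rightarrow> int^'n^'n" and L :: nat
  assumes nonsing: "\<forall>i\<in>{1..L}. nonsingular (N i)"
    and comm: "\<forall>i\<in>{1..L}. \<forall>j\<in>{1..L}. i \<noteq> j \<longrightarrow> N i ** N j = N j ** N i"
    and cop: "\<forall>i\<in>{1..L}. \<forall>j\<in>{1..L}. i \<noteq> j \<longrightarrow> mat_coprime (N i) (N j)"
  shows "(\<forall>is js. distinct is \<and> distinct js \<and> is \<noteq> [] \<and> js \<noteq> [] \<and>
            set is \<subseteq> {1..L} \<and> set js \<subseteq> {1..L} - set is \<longrightarrow>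
            mat_prod_list N is ** mat_prod_list N js = mat_prod_list N js ** mat_prod_list N is \<and>
            mat_coprime (mat_prod_list N is) (mat_prod_list N js))
       \<and> (\<forall>is. distinct is \<and> length is \<ge> 2 \<and> set is \<subseteq> {1..L} \<longrightarrow>
            is_lcm N (set is) (mat_prod_list N is))"
proof (intro conjI allI impI)
  fix xs ys :: "nat list"
  assume h: "distinct xs \<and> distinct ys \<and> xs \<noteq> [] \<and> ys \<noteq> [] \<and>
            set xs \<subseteq> {1..L} \<and> set ys \<subseteq> {1..L} - set xs"
  then have s: "set xs \<subseteq> {1..L}" "set ys \<subseteq> {1..L}" "set xs \<inter> set ys = {}" by auto
  show "mat_prod_list N xs ** mat_prod_list N ys = mat_prod_list N ys ** mat_prod_list N xs"
    using comm_pl_pl[OF nonsing comm cop s(2,1)] .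
  have "lb (mat_prod_list N xs) (mat_prod_list N ys) \<and> rb (mat_prod_list N xs) (mat_prod_list N ys)"
    using bz_lists[OF nonsing comm cop s(2,1,3)] .
  then show "mat_coprime (mat_prod_list N xs) (mat_prod_list N ys)"
    unfolding mat_coprime_def lb_def rb_def using bezout_left_coprime bezout_right_coprime by blast
next
  fix xs :: "nat list"
  assume h: "distinct xs \<and> length xs \<ge> 2 \<and> set xs \<subseteq> {1..L}"
  then have s: "set xs \<subseteq> {1..L}" "distinct xs" by auto
  have ns: "nonsingular (mat_prod_list N xs)"
    using nonsing_pl[of xs N] s nonsing by blast
  have crm: "is_crm N (set xs) (mat_prod_list N xs)"
    unfolding is_crm_def using ns pl_remove[OF nonsing comm cop s(1)] by blast
  have clm: "is_clm N (set xs) (mat_prod_list N xs)"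
    unfolding is_clm_def using ns pl_remove[OF nonsing comm cop s(1)] by blast
  have "is_lcrm N (set xs) (mat_prod_list N xs)"
    unfolding is_lcrm_def using crm lcrm_list[OF nonsing comm cop s] unfolding is_crm_def by blast
  moreover have "is_lclm N (set xs) (mat_prod_list N xs)"
    unfolding is_lclm_def using clm lclm_list[OF nonsing comm cop s] unfolding is_clm_def by blast
  ultimately show "is_lcm N (set xs) (mat_prod_list N xs)" unfolding is_lcm_def by blast
qed

end
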